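(* Let $M$ be a simply-connected domain in the Minkowski plane $(\mathbb{R}^2(u,v),du\,dv)$, let $\omega,Q,R:M\to\mathbb{R}$ be smooth functions and $H\in\mathbb{R}$ a constant. (1) Suppose $\Phi=(\Phi_1,\Phi_2):M\to\mathrm{SL}_2\mathbb{R}\times\mathrm{SL}_2\mathbb{R}$ is smooth and satisfies $(\Phi_1)_u=\Phi_1\mathcal U_1$, $(\Phi_1)_v=\Phi_1\mathcal V_1$, $(\Phi_2)_u=\Phi_2\mathcal U_2$, $(\Phi_2)_v=\Phi_2\mathcal V_2$, where $$\mathcal U_1=\begin{pmatrix}\frac{\omega_u}{4}&\frac12e^{\omega/2}(H+1)\\-e^{-\omega/2}Q&-\frac{\omega_u}{4}\end{pmatrix},\ \mathcal V_1=\begin{pmatrix}-\frac{\omega_v}{4}&e^{-\omega/2}R\\-\frac12e^{\omega/2}(H-1)&\frac{\omega_v}{4}\end{pmatrix},$$ $$\mathcal U_2=\begin{pmatrix}-\frac{\omega_u}{4}&e^{-\omega/2}Q\\-\frac12e^{\omega/2}(H-1)&\frac{\omega_u}{4}\end{pmatrix},\ \mathcal V_2=\begin{pmatrix}\frac{\omega_v}{4}&\frac12e^{\omega/2}(H+1)\\-e^{-\omega/2}R&-\frac{\omega_v}{4}\end{pmatrix}.$$ Then $\varphi:=\Phi_1\Phi_2^t:M\to\mathbb{H}^3_1(-1)$ is a conformal timelike immersion with induced metric $e^{\omega}du\,dv$ and constant mean curvature $H$ (with respect to the unit normal $N=\Phi_1\mathbf k'\Phi_2^t$). (2) Suppose $\Psi=(\Psi_1,\Psi_2):M\to\mathrm{SL}_2\mathbb{R}\times\mathrm{SL}_2\mathbb{R}$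 is smooth and satisfies $(\Psi_1)_u=\Psi_1\mathcal U_1$, $(\Psi_1)_v=\Psi_1\mathcal V_1$, $(\Psi_2)_u=\Psi_2\mathcal U_2'$, $(\Psi_2)_v=\Psi_2\mathcal V_2'$, with $\mathcal U_1,\mathcal V_1$ as in (1) and $$\mathcal U_2'=\begin{pmatrix}\frac{\omega_u}{4}&\frac12e^{\omega/2}(H-1)\\-e^{-\omega/2}Q&-\frac{\omega_u}{4}\end{pmatrix},\ \mathcal V_2'=\begin{pmatrix}-\frac{\omega_v}{4}&e^{-\omega/2}R\\-\frac12e^{\omega/2}(H+1)&\frac{\omega_v}{4}\end{pmatrix}.$$ Then $\psi:=\Psi_1\Psi_2^{-1}:M\to\mathbb{H}^3_1(-1)$ is a conformal timelike immersion with induced metric $e^{\omega}du\,dv$ and constant mean curvature $H$ (with respect to the unit normal $N=\Psi_1\mathbf k'\Psi_2^{-1}$).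
   Context: $\mathbb{E}^4_2$ is $\mathbb{R}^4$ with metric $-(dx_0)^2-(dx_1)^2+(dx_2)^2+(dx_3)^2$, identified with $M_2(\mathbb{R})$ via $(x_0,x_1,x_2,x_3)\mapsto \begin{pmatrix}x_0+x_3& x_1+x_2\\ -x_1+x_2 & x_0-x_3\end{pmatrix}$, so that $\langle u,v\rangle=\tfrac12\{\operatorname{tr}(uv)-\operatorname{tr}u\operatorname{tr}v\}$, $\langle u,u\rangle=-\det u$, and anti-de Sitter space $\mathbb{H}^3_1(-1)=\{\langle x,x\rangle=-1\}$ becomes $\mathrm{SL}_2\mathbb{R}$. $\mathbf k'=\begin{pmatrix}1&0\\0&-1\end{pmatrix}$. For an immersion $\varphi$ of a domain with null coordinates $(u,v)$, conformal timelike means $\langle\varphi_u,\varphi_u\rangle=\langle\varphi_v,\varphi_v\rangle=0$, $\langle\varphi_u,\varphi_v\rangle=\tfrac12e^{\omega}$ (metric $e^\omega du\,dv$); for a unit normal $N$ ($\langle N,N\rangle=1$, $N\perp\varphi,\varphi_u,\varphi_v$) the mean curvature is $H=2e^{-\omega}\langle\varphi_{uv},N\rangle$. *)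

theory Defs
  imports "HOL-Analysis.Analysis"
begin

text \<open>A map f on S is smooth (C-infinity)
iff there is a family D i j (intended: the partial derivative of order i in u and j in v)
with D 0 0 = f on S, every D i j continuous on S and Frechet differentiable at every point
of S with derivative (h,k) |-> h D(i+1,j) + k D(i,j+1).\<close>

definition smooth_on :: "(real \<times> real) set \<Rightarrow> (real \<times> real \<Rightarrow> 'b::real_normed_vector) \<Rightarrow> bool" where
  "smooth_on S f \<longleftrightarrow>
     (\<exists>D :: nat \<Rightarrow> nat \<Rightarrow> (real \<times> real \<Rightarrow> 'b).
        (\<forall>p\<in>S. D 0 0 p = f p) \<and>
        (\<forall>i j. continuous_on S (D i j)) \<and>
        (\<forall>i j. \<forall>p\<in>S. (D i j has_derivative
              (\<lambda>(h,k). h *\<^sub>R D (Suc i) j p + k *\<^sub>R D i (Suc j) p)) (at p)))"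

definition pu :: "(real \<times> real \<Rightarrow> 'b::real_normed_vector) \<Rightarrow> real \<times> real \<Rightarrow> 'b" where
  "pu f p = vector_derivative (\<lambda>s. f (s, snd p)) (at (fst p))"

definition pv :: "(real \<times> real \<Rightarrow> 'b::real_normed_vector) \<Rightarrow> real \<times> real \<Rightarrow> 'b" where
  "pv f p = vector_derivative (\<lambda>t. f (fst p, t)) (at (snd p))"

type_synonym mat2 = "real^2^2"

definition mat2 :: "real \<Rightarrow> real \<Rightarrow> real \<Rightarrow> real \<Rightarrow> mat2" where
  "mat2 a b c d = (\<chi> i j. if i = 1 then (if j = 1 then a else b) else (if j = 1 then c else d))"

definition mtrace :: "mat2 \<Rightarrow> real" where
  "mtrace A = A $ 1 $ 1 + A $ 2 $ 2"

text \<open>The metric of E^4_2: <u,v> = (tr(uv) - tr u tr v)/2, so <u,u> = - det u.\<close>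
definition lor_inner :: "mat2 \<Rightarrow> mat2 \<Rightarrow> real" where
  "lor_inner A B = (mtrace (A ** B) - mtrace A * mtrace B) / 2"

definition kprime :: mat2 where
  "kprime = mat2 1 0 0 (-1)"

definition U1 :: "(real\<times>real \<Rightarrow> real) \<Rightarrow> (real\<times>real \<Rightarrow> real) \<Rightarrow> real \<Rightarrow> real\<times>real \<Rightarrow> mat2" where
  "U1 \<omega> Q H p = mat2 (pu \<omega> p / 4) (exp (\<omega> p / 2) * (H + 1) / 2)
                    (- exp (- \<omega> p / 2) * Q p) (- pu \<omega> p / 4)"

definition V1 :: "(real\<times>real \<Rightarrow> real) \<Rightarrow> (real\<times>real \<Rightarrow> real) \<Rightarrow> real \<Rightarrow> real\<times>real \<Rightarrow> mat2" where
  "V1 \<omega> R H p = mat2 (- pv \<omega> p / 4) (exp (- \<omega> p / 2) * R p)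
                    (- exp (\<omega> p / 2) * (H - 1) / 2) (pv \<omega> p / 4)"

definition U2 :: "(real\<times>real \<Rightarrow> real) \<Rightarrow> (real\<times>real \<Rightarrow> real) \<Rightarrow> real \<Rightarrow> real\<times>real \<Rightarrow> mat2" where
  "U2 \<omega> Q H p = mat2 (- pu \<omega> p / 4) (exp (- \<omega> p / 2) * Q p)
                    (- exp (\<omega> p / 2) * (H - 1) / 2) (pu \<omega> p / 4)"

definition V2 :: "(real\<times>real \<Rightarrow> real) \<Rightarrow> (real\<times>real \<Rightarrow> real) \<Rightarrow> real \<Rightarrow> real\<times>real \<Rightarrow> mat2" where
  "V2 \<omega> R H p = mat2 (pv \<omega> p / 4) (exp (\<omega> p / 2) * (H + 1) / 2)
                    (- exp (- \<omega> p / 2) * R p) (- pv \<omega> p / 4)"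

definition U2' :: "(real\<times>real \<Rightarrow> real) \<Rightarrow> (real\<times>real \<Rightarrow> real) \<Rightarrow> real \<Rightarrow> real\<times>real \<Rightarrow> mat2" where
  "U2' \<omega> Q H p = mat2 (pu \<omega> p / 4) (exp (\<omega> p / 2) * (H - 1) / 2)
                     (- exp (- \<omega> p / 2) * Q p) (- pu \<omega> p / 4)"

definition V2' :: "(real\<times>real \<Rightarrow> real) \<Rightarrow> (real\<times>real \<Rightarrow> real) \<Rightarrow> real \<Rightarrow> real\<times>real \<Rightarrow> mat2" where
  "V2' \<omega> R H p = mat2 (- pv \<omega> p / 4) (exp (- \<omega> p / 2) * R p)
                     (- exp (\<omega> p / 2) * (H + 1) / 2) (pv \<omega> p / 4)"

definition SL2_map :: "(real \<times> real) set \<Rightarrow> (real \<times> real \<Rightarrow> mat2) \<Rightarrow> bool" where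
  "SL2_map S F \<longleftrightarrow> smooth_on S F \<and> (\<forall>p\<in>S. det (F p) = 1)"

definition conformal_timelike_cmc ::
  "(real \<times> real) set \<Rightarrow> (real \<times> real \<Rightarrow> mat2) \<Rightarrow> (real \<times> real \<Rightarrow> mat2)
     \<Rightarrow> (real \<times> real \<Rightarrow> real) \<Rightarrow> real \<Rightarrow> bool" where
  "conformal_timelike_cmc S \<phi> N \<omega> H \<longleftrightarrow>
     smooth_on S \<phi> \<and>
     (\<forall>p\<in>S.
        lor_inner (\<phi> p) (\<phi> p) = -1 \<and>
        (\<forall>a b. a *\<^sub>R pu \<phi> p + b *\<^sub>R pv \<phi> p = 0 \<longrightarrow> a = 0 \<and> b = 0) \<and>
        lor_inner (pu \<phi> p) (pu \<phi> p) = 0 \<and>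
        lor_inner (pv \<phi> p) (pv \<phi> p) = 0 \<and>
        lor_inner (pu \<phi> p) (pv \<phi> p) = exp (\<omega> p) / 2 \<and>
        lor_inner (N p) (N p) = 1 \<and>
        lor_inner (N p) (\<phi> p) = 0 \<and>
        lor_inner (N p) (pu \<phi> p) = 0 \<and>
        lor_inner (N p) (pv \<phi> p) = 0 \<and>
        H = 2 * exp (- \<omega> p) * lor_inner (pv (pu \<phi>) p) (N p))"

end

theory Submission
  imports Defs
begin


lemma leibniz_step:
  fixes T :: "nat \<Rightarrow> nat \<Rightarrow> 'a::real_vector"
  shows "(\<Sum>a\<le>i. real (i choose a) *\<^sub>R (T (Suc a) (i - a) + T a (Suc i - a)))
       = (\<Sum>a\<le>Suc i. real (Suc i choose a) *\<^sub>R T a (Suc i - a))"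
proof -
  have e1: "(\<Sum>a\<le>Suc i. real (Suc i choose a) *\<^sub>R T a (Suc i - a))
      = T 0 (Suc i) + (\<Sum>a\<le>i. real (i choose a) *\<^sub>R T (Suc a) (i - a))
                 + (\<Sum>a\<le>i. real (i choose Suc a) *\<^sub>R T (Suc a) (i - a))"
    by (subst sum.atMost_Suc_shift) (simp add: scaleR_add_left sum.distrib)
  have e2: "(\<Sum>a\<le>i. real (i choose Suc a) *\<^sub>R T (Suc a) (i - a))
      = (\<Sum>a<i. real (i choose Suc a) *\<^sub>R T (Suc a) (i - a))"
    by (simp add: lessThan_Suc_atMost[symmetric])
  have e3: "T 0 (Suc i) + (\<Sum>a<i. real (i choose Suc a) *\<^sub>R T (Suc a) (i - a))
      = (\<Sum>a\<le>i. real (i choose a) *\<^sub>R T a (Suc i - a))"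
  proof (cases i)
    case 0 then show ?thesis by simp
  next
    case (Suc n)
    have "(\<Sum>a\<le>i. real (i choose a) *\<^sub>R T a (Suc i - a))
        = T 0 (Suc i) + (\<Sum>a\<le>n. real (i choose Suc a) *\<^sub>R T (Suc a) (Suc i - Suc a))"
      unfolding Suc by (subst sum.atMost_Suc_shift) simp
    also have "\<dots> = T 0 (Suc i) + (\<Sum>a<i. real (i choose Suc a) *\<^sub>R T (Suc a) (i - a))"
      unfolding Suc lessThan_Suc_atMost by simp
    finally show ?thesis by simp
  qed
  show ?thesis using e1 e2 e3 by (simp add: scaleR_add_right sum.distrib algebra_simps)
qed


lemma smooth_linear:
  assumes L: "bounded_linear L" and f: "smooth_on S f"
  shows "smooth_on S (\<lambda>p. L (f p))"
proof -
  obtain D where D0: "\<forall>p\<in>S. D 0 0 p = f p" and Dc: "\<forall>i j. continuous_on S (D i j)"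
    and Dd: "\<forall>i j. \<forall>p\<in>S. (D i j has_derivative
              (\<lambda>(h,k). h *\<^sub>R D (Suc i) j p + k *\<^sub>R D i (Suc j) p)) (at p)"
    using f unfolding smooth_on_def by blast
  show ?thesis unfolding smooth_on_def
  proof (intro exI[of _ "\<lambda>i j p. L (D i j p)"] conjI allI ballI)
    fix i j show "continuous_on S (\<lambda>p. L (D i j p))"
      using Dc bounded_linear.continuous_on[OF L] by blast
  next
    fix i j p assume p: "p \<in> S"
    have "((\<lambda>p. L (D i j p)) has_derivative
        (\<lambda>x. L ((\<lambda>(h,k). h *\<^sub>R D (Suc i) j p + k *\<^sub>R D i (Suc j) p) x))) (at p)"
      using bounded_linear.has_derivative[OF L] Dd p by blast
    then show "((\<lambda>p. L (D i j p)) has_derivative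
        (\<lambda>(h,k). h *\<^sub>R L (D (Suc i) j p) + k *\<^sub>R L (D i (Suc j) p))) (at p)"
      by (rule has_derivative_eq_rhs)
         (auto simp: linear_add[OF bounded_linear.linear[OF L]] linear_scale[OF bounded_linear.linear[OF L]])
  qed (use D0 in auto)
qed

lemma smooth_cong:
  assumes "smooth_on S f" "\<And>p. p \<in> S \<Longrightarrow> f p = g p"
  shows "smooth_on S g"
  using assms unfolding smooth_on_def by metis

lemma smooth_bilinear:
  fixes f :: "real \<times> real \<Rightarrow> 'a::real_normed_vector" and g :: "real \<times> real \<Rightarrow> 'b::real_normed_vector"
    and prod :: "'a \<Rightarrow> 'b \<Rightarrow> 'c::real_normed_vector"
  assumes B: "bounded_bilinear prod" and f: "smooth_on S f" and g: "smooth_on S g"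
  shows "smooth_on S (\<lambda>p. prod (f p) (g p))"
proof -
  obtain F where F0: "\<forall>p\<in>S. F 0 0 p = f p" and Fc: "\<forall>i j. continuous_on S (F i j)"
    and Fd: "\<forall>i j. \<forall>p\<in>S. (F i j has_derivative
              (\<lambda>(h,k). h *\<^sub>R F (Suc i) j p + k *\<^sub>R F i (Suc j) p)) (at p)"
    using f unfolding smooth_on_def by blast
  obtain G where G0: "\<forall>p\<in>S. G 0 0 p = g p" and Gc: "\<forall>i j. continuous_on S (G i j)"
    and Gd: "\<forall>i j. \<forall>p\<in>S. (G i j has_derivative
              (\<lambda>(h,k). h *\<^sub>R G (Suc i) j p + k *\<^sub>R G i (Suc j) p)) (at p)"
    using g unfolding smooth_on_def by blast
  define P where "P = (\<lambda>i j p. \<Sum>a\<le>i. \<Sum>c\<le>j. (real (i choose a) * real (j choose c)) *\<^sub>R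
                      prod (F a c p) (G (i - a) (j - c) p))"
  interpret b: bounded_bilinear prod by (rule B)
  show ?thesis unfolding smooth_on_def
  proof (intro exI[of _ P] conjI allI ballI)
    fix p assume "p \<in> S" then show "P 0 0 p = prod (f p) (g p)" using F0 G0 by (simp add: P_def)
  next
    fix i j show "continuous_on S (P i j)"
      unfolding P_def
      by (intro continuous_intros b.continuous_on) (use Fc Gc in auto)
  next
    fix i j p assume p: "p \<in> S"
    have d: "(P i j has_derivative (\<lambda>d. \<Sum>a\<le>i. \<Sum>c\<le>j. (real (i choose a) * real (j choose c)) *\<^sub>R
          (prod (F a c p) ((\<lambda>(h,k). h *\<^sub>R G (Suc (i - a)) (j - c) p + k *\<^sub>R G (i - a) (Suc (j - c)) p) d)
          + prod ((\<lambda>(h,k). h *\<^sub>R F (Suc a) c p + k *\<^sub>R F a (Suc c) p) d) (G (i - a) (j - c) p)))) (at p)"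
      unfolding P_def
      by (intro has_derivative_sum has_derivative_scaleR_right b.FDERIV) (use Fd Gd p in auto)
    show "(P i j has_derivative (\<lambda>(h,k). h *\<^sub>R P (Suc i) j p + k *\<^sub>R P i (Suc j) p)) (at p)"
    proof -
      have key: "(\<Sum>a\<le>i. \<Sum>c\<le>j. (real (i choose a) * real (j choose c)) *\<^sub>R
          (prod (F a c p) ((\<lambda>(h,k). h *\<^sub>R G (Suc (i - a)) (j - c) p + k *\<^sub>R G (i - a) (Suc (j - c)) p) (h,k))
          + prod ((\<lambda>(h,k). h *\<^sub>R F (Suc a) c p + k *\<^sub>R F a (Suc c) p) (h,k)) (G (i - a) (j - c) p)))
          = h *\<^sub>R P (Suc i) j p + k *\<^sub>R P i (Suc j) p" for h k :: real
      proof -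
      have I1: "(\<Sum>a\<le>i. \<Sum>c\<le>j. (real (i choose a) * real (j choose c)) *\<^sub>R
          (prod (F (Suc a) c p) (G (i - a) (j - c) p) + prod (F a c p) (G (Suc i - a) (j - c) p)))
          = P (Suc i) j p"
      proof -
        have "(\<Sum>a\<le>i. \<Sum>c\<le>j. (real (i choose a) * real (j choose c)) *\<^sub>R
          (prod (F (Suc a) c p) (G (i - a) (j - c) p) + prod (F a c p) (G (Suc i - a) (j - c) p)))
          = (\<Sum>c\<le>j. real (j choose c) *\<^sub>R (\<Sum>a\<le>i. real (i choose a) *\<^sub>R
             ((\<lambda>a m. prod (F a c p) (G m (j - c) p)) (Suc a) (i - a) + (\<lambda>a m. prod (F a c p) (G m (j - c) p)) a (Suc i - a))))"
          by (subst sum.swap) (simp add: scaleR_sum_right mult.commute)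
        also have "\<dots> = (\<Sum>c\<le>j. real (j choose c) *\<^sub>R (\<Sum>a\<le>Suc i. real (Suc i choose a) *\<^sub>R
             prod (F a c p) (G (Suc i - a) (j - c) p)))"
          by (subst leibniz_step) simp
        also have "\<dots> = P (Suc i) j p"
          unfolding P_def scaleR_sum_right by (subst sum.swap) (simp add: mult.commute del: sum.atMost_Suc)
        finally show ?thesis .
      qed
      have I2: "(\<Sum>a\<le>i. \<Sum>c\<le>j. (real (i choose a) * real (j choose c)) *\<^sub>R
          (prod (F a (Suc c) p) (G (i - a) (j - c) p) + prod (F a c p) (G (i - a) (Suc j - c) p)))
          = P i (Suc j) p"
      proof -
        have "(\<Sum>a\<le>i. \<Sum>c\<le>j. (real (i choose a) * real (j choose c)) *\<^sub>R
          (prod (F a (Suc c) p) (G (i - a) (j - c) p) + prod (F a c p) (G (i - a) (Suc j - c) p)))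
          = (\<Sum>a\<le>i. real (i choose a) *\<^sub>R (\<Sum>c\<le>j. real (j choose c) *\<^sub>R
             ((\<lambda>c m. prod (F a c p) (G (i - a) m p)) (Suc c) (j - c) + (\<lambda>c m. prod (F a c p) (G (i - a) m p)) c (Suc j - c))))"
          by (simp add: scaleR_sum_right)
        also have "\<dots> = (\<Sum>a\<le>i. real (i choose a) *\<^sub>R (\<Sum>c\<le>Suc j. real (Suc j choose c) *\<^sub>R
             prod (F a c p) (G (i - a) (Suc j - c) p)))"
          by (subst leibniz_step) simp
        also have "\<dots> = P i (Suc j) p"
          unfolding P_def by (simp add: scaleR_sum_right del: sum.atMost_Suc)
        finally show ?thesis .
      qed
      have "(\<Sum>a\<le>i. \<Sum>c\<le>j. (real (i choose a) * real (j choose c)) *\<^sub>R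
          (prod (F a c p) ((\<lambda>(h,k). h *\<^sub>R G (Suc (i - a)) (j - c) p + k *\<^sub>R G (i - a) (Suc (j - c)) p) (h,k))
          + prod ((\<lambda>(h,k). h *\<^sub>R F (Suc a) c p + k *\<^sub>R F a (Suc c) p) (h,k)) (G (i - a) (j - c) p)))
        = (\<Sum>a\<le>i. \<Sum>c\<le>j. h *\<^sub>R ((real (i choose a) * real (j choose c)) *\<^sub>R
          (prod (F (Suc a) c p) (G (i - a) (j - c) p) + prod (F a c p) (G (Suc i - a) (j - c) p)))
          + k *\<^sub>R ((real (i choose a) * real (j choose c)) *\<^sub>R
          (prod (F a (Suc c) p) (G (i - a) (j - c) p) + prod (F a c p) (G (i - a) (Suc j - c) p))))"
        by (intro sum.cong refl) (simp add: b.add_left b.add_right b.scaleR_left b.scaleR_right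
              Suc_diff_le algebra_simps)
      also have "\<dots> = h *\<^sub>R P (Suc i) j p + k *\<^sub>R P i (Suc j) p"
        by (simp only: sum.distrib scaleR_sum_right[symmetric] I1 I2)
      finally show ?thesis .
      qed
      show ?thesis
      proof (rule has_derivative_eq_rhs[OF d], rule ext)
        fix d :: "real \<times> real"
        obtain h k where dd: "d = (h, k)" by (cases d)
        show "(\<Sum>a\<le>i. \<Sum>c\<le>j. (real (i choose a) * real (j choose c)) *\<^sub>R
          (prod (F a c p) ((\<lambda>(h,k). h *\<^sub>R G (Suc (i - a)) (j - c) p + k *\<^sub>R G (i - a) (Suc (j - c)) p) d)
          + prod ((\<lambda>(h,k). h *\<^sub>R F (Suc a) c p + k *\<^sub>R F a (Suc c) p) d) (G (i - a) (j - c) p)))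
          = (\<lambda>(h,k). h *\<^sub>R P (Suc i) j p + k *\<^sub>R P i (Suc j) p) d"
          unfolding dd prod.case using key[of h k, unfolded prod.case] .
      qed
    qed
  qed
qed


lemma two_ne: "(1::2) \<noteq> 2" "(2::2) \<noteq> 1" by simp_all

lemma mat2_nth [simp]:
  "mat2 a b c d $ 1 $ 1 = a" "mat2 a b c d $ 1 $ 2 = b"
  "mat2 a b c d $ 2 $ 1 = c" "mat2 a b c d $ 2 $ 2 = d"
  by (simp_all add: mat2_def)

lemma mat2_eq_iff: "(X::mat2) = Y \<longleftrightarrow> X$1$1 = Y$1$1 \<and> X$1$2 = Y$1$2 \<and> X$2$1 = Y$2$1 \<and> X$2$2 = Y$2$2"
  by (auto simp: vec_eq_iff forall_2)

lemma mat2_eta: "(X::mat2) = mat2 (X$1$1) (X$1$2) (X$2$1) (X$2$2)"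
  by (simp add: mat2_eq_iff)

lemma mat2_mult [simp]: "mat2 a b c d ** mat2 a' b' c' d' =
   mat2 (a*a' + b*c') (a*b' + b*d') (c*a' + d*c') (c*b' + d*d')"
  by (simp add: mat2_eq_iff matrix_matrix_mult_def sum_2)

lemma mat2_add [simp]: "mat2 a b c d + mat2 a' b' c' d' = mat2 (a+a') (b+b') (c+c') (d+d')"
  by (simp add: mat2_eq_iff)

lemma mat2_scaleR [simp]: "r *\<^sub>R mat2 a b c d = mat2 (r*a) (r*b) (r*c) (r*d)"
  by (simp add: mat2_eq_iff)

lemma mat2_transpose [simp]: "transpose (mat2 a b c d) = mat2 a c b d"
  by (simp add: mat2_eq_iff transpose_def)

lemma mat2_det [simp]: "det (mat2 a b c d) = a*d - b*c"
  by (simp add: det_2)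

lemma mat2_zero: "(0::mat2) = mat2 0 0 0 0" by (simp add: mat2_eq_iff)
lemma mat2_one: "(mat 1::mat2) = mat2 1 0 0 1" by (simp add: mat2_eq_iff mat_def)

lemma lor_inner_mat2 [simp]: "lor_inner (mat2 a b c d) (mat2 a' b' c' d') =
   ((a*a' + b*c' + c*b' + d*d') - (a+d)*(a'+d'))/2"
  by (simp add: lor_inner_def mtrace_def)

lemmas ent = matrix_matrix_mult_def sum_2 det_2 lor_inner_def mtrace_def transpose_def mat_def

lemma lor_det: "lor_inner X Y = - (det (X + Y) - det X - det Y) / 2"
  by (simp add: ent field_simps)

lemma mat_rdistrib: "((A::mat2) + B) ** C = A ** C + B ** C"
  by (simp add: vec_eq_iff matrix_matrix_mult_def sum_2 algebra_simps)

lemma lor_self: "lor_inner X X = - det X"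
  by (simp add: ent field_simps)

lemma lor_inv:
  assumes "det (P::mat2) = 1" "det (Q::mat2) = 1"
  shows "lor_inner (P ** X ** Q) (P ** Y ** Q) = lor_inner X Y"
proof -
  have "P ** X ** Q + P ** Y ** Q = P ** (X + Y) ** Q"
    by (simp add: matrix_add_ldistrib mat_rdistrib)
  then show ?thesis using assms by (simp add: lor_det det_mul)
qed

definition adj2 :: "mat2 \<Rightarrow> mat2" where
  "adj2 X = mat2 (X$2$2) (- X$1$2) (- X$2$1) (X$1$1)"

lemma adj2_mat2 [simp]: "adj2 (mat2 a b c d) = mat2 d (-b) (-c) a" by (simp add: adj2_def)

lemma adj2_left: "adj2 X ** X = det X *\<^sub>R mat 1"
  by (subst (1 2 3) mat2_eta) (simp add: mat2_one algebra_simps)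

lemma adj2_right: "X ** adj2 X = det X *\<^sub>R mat 1"
  by (subst (1 2 3) mat2_eta) (simp add: mat2_one algebra_simps)

lemma adj2_mult: "adj2 (X ** Y) = adj2 Y ** adj2 X"
  by (subst (1 2 3 4) mat2_eta) (simp add: algebra_simps)

lemma adj2_det [simp]: "det (adj2 X) = det X"
  by (subst (1 2) mat2_eta) (simp add: algebra_simps)

lemma matrix_inv_adj2: assumes "det X = 1" shows "matrix_inv X = adj2 X"
proof -
  have "X ** adj2 X = mat 1" using assms by (simp add: adj2_right)
  moreover have "adj2 X ** X = mat 1" using assms by (simp add: adj2_left)
  ultimately have inv: "invertible X" unfolding invertible_def by blast
  let ?B = "matrix_inv X"
  have "X ** ?B = mat 1 \<and> ?B ** X = mat 1"
    unfolding matrix_inv_def by (rule someI_ex) (use inv in \<open>simp add: invertible_def\<close>)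
  then have "?B = ?B ** (X ** adj2 X)" "?B ** X = mat 1" using \<open>X ** adj2 X = mat 1\<close> by auto
  then show ?thesis by (simp add: matrix_mul_assoc)
qed

lemma bl_adj2: "bounded_linear adj2"
  by (rule linear_conv_bounded_linear[THEN iffD1], rule linearI)
     (simp_all add: adj2_def mat2_eq_iff)

lemma bl_transpose: "bounded_linear (transpose :: mat2 \<Rightarrow> mat2)"
  by (rule linear_conv_bounded_linear[THEN iffD1], rule linearI)
     (simp_all add: transpose_def vec_eq_iff)

lemma bb_mult: "bounded_bilinear (\<lambda>(A::mat2) (B::mat2). A ** B)"
  unfolding bilinear_conv_bounded_bilinear[symmetric] bilinear_def
  by (auto intro!: linearI simp: matrix_add_ldistrib mat_rdistrib
       matrix_scalar_ac scalar_matrix_assoc)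



lemma pd:
  assumes d: "(f has_derivative L) (at p)"
  shows "pu f p = L (1,0) \<and> pv f p = L (0,1)"
proof -
  have lin: "linear L" using d by (rule has_derivative_linear)
  have d1: "((\<lambda>s. (s, snd p)) has_derivative (\<lambda>s. (s, 0))) (at (fst p))"
    by (auto intro!: derivative_eq_intros)
  have d2: "((\<lambda>t. (fst p, t)) has_derivative (\<lambda>t. (0, t))) (at (snd p))"
    by (auto intro!: derivative_eq_intros)
  have "((\<lambda>s. f (s, snd p)) has_derivative (\<lambda>s. L (s, 0))) (at (fst p))"
  proof -
    have d': "(f has_derivative L) (at ((\<lambda>s. (s, snd p)) (fst p)))" using d by (simp only: prod.collapse)
    show ?thesis using has_derivative_compose[OF d1 d'] .
  qed
  moreover have "(\<lambda>s. L (s, 0)) = (\<lambda>s. s *\<^sub>R L (1,0))"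
  proof
    fix s :: real have "(s, 0::real) = s *\<^sub>R (1, 0)" by simp
    then show "L (s, 0) = s *\<^sub>R L (1,0)" using linear_scale[OF lin, of s "(1,0)"] by simp
  qed
  ultimately have "((\<lambda>s. f (s, snd p)) has_vector_derivative L (1,0)) (at (fst p))"
    unfolding has_vector_derivative_def by simp
  moreover
  have "((\<lambda>t. f (fst p, t)) has_derivative (\<lambda>t. L (0, t))) (at (snd p))"
  proof -
    have d': "(f has_derivative L) (at ((\<lambda>t. (fst p, t)) (snd p)))" using d by (simp only: prod.collapse)
    show ?thesis using has_derivative_compose[OF d2 d'] .
  qed
  moreover have "(\<lambda>t. L (0, t)) = (\<lambda>t. t *\<^sub>R L (0,1))"
  proof
    fix t :: real have "(0::real, t) = t *\<^sub>R (0, 1)" by simp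
    then show "L (0, t) = t *\<^sub>R L (0,1)" using linear_scale[OF lin, of t "(0,1)"] by simp
  qed
  ultimately have "((\<lambda>t. f (fst p, t)) has_vector_derivative L (0,1)) (at (snd p))"
    "((\<lambda>s. f (s, snd p)) has_vector_derivative L (1,0)) (at (fst p))"
    unfolding has_vector_derivative_def by simp_all
  then show ?thesis unfolding pu_def pv_def by (simp add: vector_derivative_at)
qed

lemma smooth_deriv:
  assumes S: "open S" and f: "smooth_on S f" and p: "p \<in> S"
  shows "(f has_derivative (\<lambda>(h,k). h *\<^sub>R pu f p + k *\<^sub>R pv f p)) (at p)"
proof -
  obtain D where D0: "\<forall>p\<in>S. D 0 0 p = f p"
    and Dd: "\<forall>i j. \<forall>p\<in>S. (D i j has_derivative
              (\<lambda>(h,k). h *\<^sub>R D (Suc i) j p + k *\<^sub>R D i (Suc j) p)) (at p)"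
    using f unfolding smooth_on_def by blast
  have "(D 0 0 has_derivative (\<lambda>(h,k). h *\<^sub>R D 1 0 p + k *\<^sub>R D 0 1 p)) (at p)"
    using Dd p by (metis One_nat_def)
  then have "(f has_derivative (\<lambda>(h,k). h *\<^sub>R D 1 0 p + k *\<^sub>R D 0 1 p)) (at p)"
    by (rule has_derivative_transform_within_open[OF _ S p]) (use D0 in auto)
  moreover from pd[OF this] have e: "pu f p = D 1 0 p" "pv f p = D 0 1 p" by simp_all
  ultimately show ?thesis by (simp only: e)
qed


lemma mm_deriv:
  fixes f g :: "real \<times> real \<Rightarrow> mat2"
  assumes "(f has_derivative f') (at x)" "(g has_derivative g') (at x)"
  shows "((\<lambda>x. f x ** g x) has_derivative (\<lambda>h. f x ** g' h + f' h ** g x)) (at x)"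
  using bounded_bilinear.FDERIV[OF bb_mult assms] by simp

lemma mult3_split: "(F::mat2) ** ((T::mat2) ** (G::mat2)) + (F ** (U::mat2)) ** G = F ** (U + T) ** G"
  by (simp add: matrix_add_ldistrib mat_rdistrib matrix_mul_assoc add.commute)

lemma mult3_split2: "((F::mat2) ** (A::mat2)) ** ((T::mat2) ** (G::mat2)) + (F ** (X::mat2) + (F ** (V::mat2)) ** A) ** G
   = F ** (A ** T + X + V ** A) ** G"
  by (simp add: matrix_add_ldistrib mat_rdistrib matrix_mul_assoc add_ac)

lemma main:
  fixes M :: "(real \<times> real) set" and \<omega> Q R :: "real \<times> real \<Rightarrow> real" and H :: real
    and F G :: "real \<times> real \<Rightarrow> mat2"
  assumes M: "open M" and w: "smooth_on M \<omega>" and sF: "smooth_on M F" and sG: "smooth_on M G"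
    and hyp: "\<forall>p\<in>M. det (F p) = 1 \<and> det (G p) = 1 \<and>
       pu F p = F p ** U1 \<omega> Q H p \<and> pv F p = F p ** V1 \<omega> R H p \<and>
       pu G p = transpose (U2 \<omega> Q H p) ** G p \<and> pv G p = transpose (V2 \<omega> R H p) ** G p"
  shows "conformal_timelike_cmc M (\<lambda>p. F p ** G p) (\<lambda>p. F p ** kprime ** G p) \<omega> H"
proof -
  define A where "A = (\<lambda>q. mat2 0 (exp (\<omega> q / 2)) 0 0)"
  define B where "B = (\<lambda>q. mat2 0 0 (exp (\<omega> q / 2)) 0)"
  define E where "E = mat2 0 1 0 0"
  have AE: "A = (\<lambda>q. exp (\<omega> q / 2) *\<^sub>R E)" unfolding A_def E_def by simp
  have dF: "(F has_derivative (\<lambda>(h,k). h *\<^sub>R (F q ** U1 \<omega> Q H q) + k *\<^sub>R (F q ** V1 \<omega> R H q))) (at q)"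
    if q: "q \<in> M" for q
    using smooth_deriv[OF M sF q] hyp q by simp
  have dG: "(G has_derivative (\<lambda>(h,k). h *\<^sub>R (transpose (U2 \<omega> Q H q) ** G q)
                     + k *\<^sub>R (transpose (V2 \<omega> R H q) ** G q))) (at q)"
    if q: "q \<in> M" for q
    using smooth_deriv[OF M sG q] hyp q by simp
  have dphi: "((\<lambda>p. F p ** G p) has_derivative (\<lambda>d. F q ** (\<lambda>(h,k). h *\<^sub>R (transpose (U2 \<omega> Q H q) ** G q)
                     + k *\<^sub>R (transpose (V2 \<omega> R H q) ** G q)) d
         + (\<lambda>(h,k). h *\<^sub>R (F q ** U1 \<omega> Q H q) + k *\<^sub>R (F q ** V1 \<omega> R H q)) d ** G q)) (at q)"
    if q: "q \<in> M" for q
    by (rule mm_deriv[OF dF[OF q] dG[OF q]])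
  have puphi: "pu (\<lambda>p. F p ** G p) q = F q ** A q ** G q" if q: "q \<in> M" for q
  proof -
    have "pu (\<lambda>p. F p ** G p) q = F q ** (transpose (U2 \<omega> Q H q) ** G q) + (F q ** U1 \<omega> Q H q) ** G q"
      using pd[OF dphi[OF q]] by simp
    also have "\<dots> = F q ** (U1 \<omega> Q H q + transpose (U2 \<omega> Q H q)) ** G q" by (rule mult3_split)
    also have "U1 \<omega> Q H q + transpose (U2 \<omega> Q H q) = A q"
      unfolding U1_def U2_def A_def by (simp add: field_simps)
    finally show ?thesis .
  qed
  have pvphi: "pv (\<lambda>p. F p ** G p) q = F q ** B q ** G q" if q: "q \<in> M" for q
  proof -
    have "pv (\<lambda>p. F p ** G p) q = F q ** (transpose (V2 \<omega> R H q) ** G q) + (F q ** V1 \<omega> R H q) ** G q"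
      using pd[OF dphi[OF q]] by simp
    also have "\<dots> = F q ** (V1 \<omega> R H q + transpose (V2 \<omega> R H q)) ** G q" by (rule mult3_split)
    also have "V1 \<omega> R H q + transpose (V2 \<omega> R H q) = B q"
      unfolding V1_def V2_def B_def by (simp add: field_simps)
    finally show ?thesis .
  qed
  have ee: "exp (\<omega> q / 2) * exp (\<omega> q / 2) = exp (\<omega> q)" for q
    by (simp add: exp_add[symmetric])
  have smooth: "smooth_on M (\<lambda>p. F p ** G p)"
    using smooth_bilinear[OF bb_mult sF sG] by simp
  have H: "H = 2 * exp (- \<omega> p) * lor_inner (pv (pu (\<lambda>p. F p ** G p)) p) (F p ** kprime ** G p)"
    if p: "p \<in> M" for p
  proof -
    have dw: "(\<omega> has_derivative (\<lambda>(h,k). h * pu \<omega> p + k * pv \<omega> p)) (at p)"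
      using smooth_deriv[OF M w p] by simp
    have dA: "(A has_derivative (\<lambda>d. (((\<lambda>(h,k). h * pu \<omega> p + k * pv \<omega> p) d / 2) * exp (\<omega> p / 2)) *\<^sub>R E)) (at p)"
      unfolding AE by (auto intro!: derivative_eq_intros dw)
    have dd: "((\<lambda>q. F q ** A q ** G q) has_derivative
       (\<lambda>h. (F p ** A p) ** ((\<lambda>(h,k). h *\<^sub>R (transpose (U2 \<omega> Q H p) ** G p)
                     + k *\<^sub>R (transpose (V2 \<omega> R H p) ** G p)) h)
          + (F p ** (((\<lambda>(h,k). h * pu \<omega> p + k * pv \<omega> p) h / 2) * exp (\<omega> p / 2)) *\<^sub>R E
             + (\<lambda>(h,k). h *\<^sub>R (F p ** U1 \<omega> Q H p) + k *\<^sub>R (F p ** V1 \<omega> R H p)) h ** A p) ** G p)) (at p)"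
      by (rule mm_deriv[OF mm_deriv[OF dF[OF p] dA] dG[OF p]])
    have dd2: "(pu (\<lambda>p. F p ** G p) has_derivative
       (\<lambda>h. (F p ** A p) ** ((\<lambda>(h,k). h *\<^sub>R (transpose (U2 \<omega> Q H p) ** G p)
                     + k *\<^sub>R (transpose (V2 \<omega> R H p) ** G p)) h)
          + (F p ** (((\<lambda>(h,k). h * pu \<omega> p + k * pv \<omega> p) h / 2) * exp (\<omega> p / 2)) *\<^sub>R E
             + (\<lambda>(h,k). h *\<^sub>R (F p ** U1 \<omega> Q H p) + k *\<^sub>R (F p ** V1 \<omega> R H p)) h ** A p) ** G p)) (at p)"
      by (rule has_derivative_transform_within_open[OF dd M p]) (simp add: puphi)
    define Av where "Av = ((pv \<omega> p / 2) * exp (\<omega> p / 2)) *\<^sub>R E"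
    have "pv (pu (\<lambda>p. F p ** G p)) p = (F p ** A p) ** (transpose (V2 \<omega> R H p) ** G p)
        + (F p ** Av + (F p ** V1 \<omega> R H p) ** A p) ** G p"
      using pd[OF dd2] by (simp add: Av_def)
    also have "\<dots> = F p ** (A p ** transpose (V2 \<omega> R H p) + Av + V1 \<omega> R H p ** A p) ** G p"
      by (rule mult3_split2)
    finally have "lor_inner (pv (pu (\<lambda>p. F p ** G p)) p) (F p ** kprime ** G p)
       = lor_inner (A p ** transpose (V2 \<omega> R H p) + Av + V1 \<omega> R H p ** A p) kprime"
      using hyp p by (simp add: lor_inv)
    also have "\<dots> = exp (\<omega> p / 2) * exp (\<omega> p / 2) * H / 2"
      unfolding A_def V2_def V1_def Av_def E_def kprime_def by (simp add: field_simps)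
    finally show ?thesis by (simp add: ee exp_minus field_simps)
  qed
  have kdet: "det kprime = -1" by (simp add: kprime_def)
  show ?thesis unfolding conformal_timelike_cmc_def
  proof (intro conjI smooth ballI allI impI)
    fix p assume p: "p \<in> M"
    have dF1: "det (F p) = 1" and dG1: "det (G p) = 1" using hyp p by auto
    have e0: "exp (\<omega> p / 2) \<noteq> 0" by simp
    show "lor_inner (F p ** G p) (F p ** G p) = -1"
      using dF1 dG1 by (simp add: lor_self det_mul)
    show "lor_inner (pu (\<lambda>p. F p ** G p) p) (pu (\<lambda>p. F p ** G p) p) = 0"
      using dF1 dG1 p by (simp add: puphi lor_inv A_def)
    show "lor_inner (pv (\<lambda>p. F p ** G p) p) (pv (\<lambda>p. F p ** G p) p) = 0"
      using dF1 dG1 p by (simp add: pvphi lor_inv B_def)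
    show "lor_inner (pu (\<lambda>p. F p ** G p) p) (pv (\<lambda>p. F p ** G p) p) = exp (\<omega> p) / 2"
      using dF1 dG1 p by (simp add: puphi pvphi lor_inv A_def B_def ee[symmetric])
    show "lor_inner (F p ** kprime ** G p) (F p ** kprime ** G p) = 1"
      using dF1 dG1 kdet by (simp add: lor_self det_mul)
    have FG: "F p ** G p = F p ** mat 1 ** G p" by simp
    show "lor_inner (F p ** kprime ** G p) (F p ** G p) = 0"
      using dF1 dG1 by (subst FG) (simp add: lor_inv kprime_def mat2_one)
    show "lor_inner (F p ** kprime ** G p) (pu (\<lambda>p. F p ** G p) p) = 0"
      using dF1 dG1 p by (simp add: puphi lor_inv A_def kprime_def)
    show "lor_inner (F p ** kprime ** G p) (pv (\<lambda>p. F p ** G p) p) = 0"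
      using dF1 dG1 p by (simp add: pvphi lor_inv B_def kprime_def)
    show "H = 2 * exp (- \<omega> p) * lor_inner (pv (pu (\<lambda>p. F p ** G p)) p) (F p ** kprime ** G p)"
      by (rule H[OF p])
    fix a b assume ab: "a *\<^sub>R pu (\<lambda>p. F p ** G p) p + b *\<^sub>R pv (\<lambda>p. F p ** G p) p = 0"
    define W where "W = a *\<^sub>R A p + b *\<^sub>R B p"
    have "F p ** W ** G p = 0"
      using ab p unfolding W_def
      by (simp add: puphi pvphi matrix_add_ldistrib mat_rdistrib scalar_matrix_assoc matrix_scalar_ac)
    then have "adj2 (F p) ** (F p ** W ** G p) ** adj2 (G p) = 0" by simp
    moreover have "adj2 (F p) ** (F p ** W ** G p) ** adj2 (G p) = W"
    proof -
      have "adj2 (F p) ** (F p ** W ** G p) ** adj2 (G p) = (adj2 (F p) ** F p) ** W ** (G p ** adj2 (G p))"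
        by (simp add: matrix_mul_assoc)
      also have "\<dots> = W" using dF1 dG1 by (simp add: adj2_left adj2_right)
      finally show ?thesis .
    qed
    ultimately have "W = 0" by simp
    then have "a * exp (\<omega> p / 2) = 0" "b * exp (\<omega> p / 2) = 0"
      unfolding W_def A_def B_def by (simp_all add: mat2_zero mat2_eq_iff)
    then show "a = 0" "b = 0" by simp_all
  qed
qed


theorem theorem5p1:
  fixes M :: "(real \<times> real) set"
    and \<omega> Q R :: "real \<times> real \<Rightarrow> real"
    and H :: real
    and \<Phi>1 \<Phi>2 \<Psi>1 \<Psi>2 :: "real \<times> real \<Rightarrow> real^2^2"
  assumes "open M" and "connected M" and "simply_connected M"
    and "smooth_on M \<omega>" and "smooth_on M Q" and "smooth_on M R"
  shows
    "(SL2_map M \<Phi>1 \<and> SL2_map M \<Phi>2 \<and>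
      (\<forall>p\<in>M. pu \<Phi>1 p = \<Phi>1 p ** U1 \<omega> Q H p \<and> pv \<Phi>1 p = \<Phi>1 p ** V1 \<omega> R H p \<and>
              pu \<Phi>2 p = \<Phi>2 p ** U2 \<omega> Q H p \<and> pv \<Phi>2 p = \<Phi>2 p ** V2 \<omega> R H p)
      \<longrightarrow> conformal_timelike_cmc M (\<lambda>p. \<Phi>1 p ** transpose (\<Phi>2 p))
            (\<lambda>p. \<Phi>1 p ** kprime ** transpose (\<Phi>2 p)) \<omega> H)
     \<and>
     (SL2_map M \<Psi>1 \<and> SL2_map M \<Psi>2 \<and>
      (\<forall>p\<in>M. pu \<Psi>1 p = \<Psi>1 p ** U1 \<omega> Q H p \<and> pv \<Psi>1 p = \<Psi>1 p ** V1 \<omega> R H p \<and>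
              pu \<Psi>2 p = \<Psi>2 p ** U2' \<omega> Q H p \<and> pv \<Psi>2 p = \<Psi>2 p ** V2' \<omega> R H p)
      \<longrightarrow> conformal_timelike_cmc M (\<lambda>p. \<Psi>1 p ** matrix_inv (\<Psi>2 p))
            (\<lambda>p. \<Psi>1 p ** kprime ** matrix_inv (\<Psi>2 p)) \<omega> H)"
  proof (intro conjI impI)
  assume h: "SL2_map M \<Phi>1 \<and> SL2_map M \<Phi>2 \<and>
      (\<forall>p\<in>M. pu \<Phi>1 p = \<Phi>1 p ** U1 \<omega> Q H p \<and> pv \<Phi>1 p = \<Phi>1 p ** V1 \<omega> R H p \<and>
              pu \<Phi>2 p = \<Phi>2 p ** U2 \<omega> Q H p \<and> pv \<Phi>2 p = \<Phi>2 p ** V2 \<omega> R H p)"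
  have s1: "smooth_on M \<Phi>1" and s2: "smooth_on M \<Phi>2"
    and d1: "\<forall>p\<in>M. det (\<Phi>1 p) = 1" and d2: "\<forall>p\<in>M. det (\<Phi>2 p) = 1"
    using h unfolding SL2_map_def by auto
  have sG: "smooth_on M (\<lambda>p. transpose (\<Phi>2 p))"
    by (rule smooth_linear[OF bl_transpose s2])
  have puG: "pu (\<lambda>p. transpose (\<Phi>2 p)) p = transpose (pu \<Phi>2 p)
       \<and> pv (\<lambda>p. transpose (\<Phi>2 p)) p = transpose (pv \<Phi>2 p)" if p: "p \<in> M" for p
    using pd[OF bounded_linear.has_derivative[OF bl_transpose smooth_deriv[OF assms(1) s2 p]]] by simp
  show "conformal_timelike_cmc M (\<lambda>p. \<Phi>1 p ** transpose (\<Phi>2 p))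
            (\<lambda>p. \<Phi>1 p ** kprime ** transpose (\<Phi>2 p)) \<omega> H"
  proof (rule main[OF assms(1) assms(4) s1 sG], intro ballI conjI)
    fix p assume p: "p \<in> M"
    show "det (\<Phi>1 p) = 1" "det (transpose (\<Phi>2 p)) = 1" using d1 d2 p by auto
    show "pu \<Phi>1 p = \<Phi>1 p ** U1 \<omega> Q H p" "pv \<Phi>1 p = \<Phi>1 p ** V1 \<omega> R H p" using h p by auto
    show "pu (\<lambda>p. transpose (\<Phi>2 p)) p = transpose (U2 \<omega> Q H p) ** transpose (\<Phi>2 p)"
      using puG[OF p] h p by (simp add: matrix_transpose_mul)
    show "pv (\<lambda>p. transpose (\<Phi>2 p)) p = transpose (V2 \<omega> R H p) ** transpose (\<Phi>2 p)"
      using puG[OF p] h p by (simp add: matrix_transpose_mul)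
  qed
next
  assume h: "SL2_map M \<Psi>1 \<and> SL2_map M \<Psi>2 \<and>
      (\<forall>p\<in>M. pu \<Psi>1 p = \<Psi>1 p ** U1 \<omega> Q H p \<and> pv \<Psi>1 p = \<Psi>1 p ** V1 \<omega> R H p \<and>
              pu \<Psi>2 p = \<Psi>2 p ** U2' \<omega> Q H p \<and> pv \<Psi>2 p = \<Psi>2 p ** V2' \<omega> R H p)"
  have s1: "smooth_on M \<Psi>1" and s2: "smooth_on M \<Psi>2"
    and d1: "\<forall>p\<in>M. det (\<Psi>1 p) = 1" and d2: "\<forall>p\<in>M. det (\<Psi>2 p) = 1"
    using h unfolding SL2_map_def by auto
  have inv: "matrix_inv (\<Psi>2 p) = adj2 (\<Psi>2 p)" if "p \<in> M" for p
    using d2 that by (simp add: matrix_inv_adj2)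
  have sG: "smooth_on M (\<lambda>p. matrix_inv (\<Psi>2 p))"
    by (rule smooth_cong[OF smooth_linear[OF bl_adj2 s2]]) (simp add: inv)
  have puG: "pu (\<lambda>p. matrix_inv (\<Psi>2 p)) p = adj2 (pu \<Psi>2 p)
       \<and> pv (\<lambda>p. matrix_inv (\<Psi>2 p)) p = adj2 (pv \<Psi>2 p)" if p: "p \<in> M" for p
  proof -
    have "((\<lambda>p. matrix_inv (\<Psi>2 p)) has_derivative
        (\<lambda>x. adj2 ((\<lambda>(h,k). h *\<^sub>R pu \<Psi>2 p + k *\<^sub>R pv \<Psi>2 p) x))) (at p)"
      by (rule has_derivative_transform_within_open[OF
          bounded_linear.has_derivative[OF bl_adj2 smooth_deriv[OF assms(1) s2 p]] assms(1) p])
         (simp add: inv)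
    from pd[OF this] show ?thesis by simp
  qed
  have aU: "adj2 (U2' \<omega> Q H p) = transpose (U2 \<omega> Q H p)" "adj2 (V2' \<omega> R H p) = transpose (V2 \<omega> R H p)" for p
    unfolding U2'_def U2_def V2'_def V2_def by simp_all
  show "conformal_timelike_cmc M (\<lambda>p. \<Psi>1 p ** matrix_inv (\<Psi>2 p))
            (\<lambda>p. \<Psi>1 p ** kprime ** matrix_inv (\<Psi>2 p)) \<omega> H"
  proof (rule main[OF assms(1) assms(4) s1 sG], intro ballI conjI)
    fix p assume p: "p \<in> M"
    show "det (\<Psi>1 p) = 1" "det (matrix_inv (\<Psi>2 p)) = 1" using d1 d2 p inv[OF p] by auto
    show "pu \<Psi>1 p = \<Psi>1 p ** U1 \<omega> Q H p" "pv \<Psi>1 p = \<Psi>1 p ** V1 \<omega> R H p" using h p by auto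
    show "pu (\<lambda>p. matrix_inv (\<Psi>2 p)) p = transpose (U2 \<omega> Q H p) ** matrix_inv (\<Psi>2 p)"
      using puG[OF p] h p inv[OF p] by (simp add: adj2_mult aU)
    show "pv (\<lambda>p. matrix_inv (\<Psi>2 p)) p = transpose (V2 \<omega> R H p) ** matrix_inv (\<Psi>2 p)"
      using puG[OF p] h p inv[OF p] by (simp add: adj2_mult aU)
  qed
qed

end
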